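(* Let $x_j$ be a real random variable and $\boldsymbol{x}_C$ a random vector independent of $x_j$. If $f(x_j,\boldsymbol{x}_C)=g(x_j)+h(\boldsymbol{x}_C)$, where $g$ is a function of $x_j$ only and $h$ is a function of $\boldsymbol{x}_C$ only, then $$\mathbb{E}_{\boldsymbol{x}_C}\big[I_{ice}(x_j;\boldsymbol{x}_C)\big]=I_{pdp}(x_j).$$
   Context: Inputs are $\boldsymbol{x}=(x_1,\dots,x_m)$ with independent components; $C=\{1,\dots,m\}\setminus\{j\}$ and $\boldsymbol{x}_C$ denotes the vector of the inputs with indices in $C$. $\mathbb{E}_{z}$ and $\mathbb{V}_{z}$ denote expectation and variance taken with respect to the random variable $z$ only, the other arguments being held fixed. For a fixed value of $\boldsymbol{x}_C$, the ICE importance is $I_{ice}(x_j;\boldsymbol{x}_C)=\sqrt{\mathbb{V}_{x_j}[f(x_j,\boldsymbol{x}_C)]}$. The PDP importance is $I_{pdp}(x_j)=\sqrt{\mathbb{V}_{x_j}\big[\mathbb{E}_{\boldsymbol{x}_C}[f(x_j,\boldsymbol{x}_C)]\big]}$. All expectations and variances involved are assumed to exist and be finite. *)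

theory Defs
  imports "HOL-Probability.Probability"
begin

definition var_wrt :: "'a measure \<Rightarrow> ('a \<Rightarrow> real) \<Rightarrow> real" where
  "var_wrt P u = (\<integral>x. (u x - (\<integral>y. u y \<partial>P))\<^sup>2 \<partial>P)"

text \<open>ICE importance of x_j at a fixed value c of x_C; Pj is the law of x_j.\<close>
definition I_ice :: "real measure \<Rightarrow> (real \<Rightarrow> 'c \<Rightarrow> real) \<Rightarrow> 'c \<Rightarrow> real" where
  "I_ice Pj f c = sqrt (var_wrt Pj (\<lambda>x. f x c))"

text \<open>PDP importance of x_j; Pj, PC are the laws of x_j and x_C.\<close>
definition I_pdp :: "real measure \<Rightarrow> 'c measure \<Rightarrow> (real \<Rightarrow> 'c \<Rightarrow> real) \<Rightarrow> real" where
  "I_pdp Pj PC f = sqrt (var_wrt Pj (\<lambda>x. \<integral>c. f x c \<partial>PC))"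

end

theory Submission
  imports Defs
begin

theorem theorem1:
  fixes M :: "'a measure" and X :: "'a \<Rightarrow> real" and N :: "'c measure" and Z :: "'a \<Rightarrow> 'c"
    and g :: "real \<Rightarrow> real" and h :: "'c \<Rightarrow> real" and f :: "real \<Rightarrow> 'c \<Rightarrow> real"
  assumes "prob_space M"
    and "X \<in> borel_measurable M" and "Z \<in> measurable M N"
    and indep: "\<forall>A \<in> sets borel. \<forall>B \<in> sets N.
                 measure M (X -` A \<inter> Z -` B \<inter> space M)
                   = measure M (X -` A \<inter> space M) * measure M (Z -` B \<inter> space M)"
    and "g \<in> borel_measurable borel" and "h \<in> borel_measurable N"
    and "f = (\<lambda>x c. g x + h c)"
    and "integrable (distr M borel X) g"
    and "integrable (distr M borel X) (\<lambda>x. (g x)\<^sup>2)"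
    and "integrable (distr M N Z) h"
  shows "(\<integral>c. I_ice (distr M borel X) f c \<partial>(distr M N Z))
           = I_pdp (distr M borel X) (distr M N Z) f"
proof -
  define P where "P = distr M borel X"
  define Q where "Q = distr M N Z"
  have pP: "prob_space P" unfolding P_def
    by (rule prob_space.prob_space_distr[OF assms(1) assms(2)])
  have pQ: "prob_space Q" unfolding Q_def
    by (rule prob_space.prob_space_distr[OF assms(1) assms(3)])
  have ig: "integrable P g" using assms(8) P_def by simp
  have ih: "integrable Q h" using assms(10) Q_def by simp
  define v where "v = var_wrt P g"
  have shift: "var_wrt P (\<lambda>x. g x + a) = v" for a
  proof -
    have "(\<integral>y. g y + a \<partial>P) = (\<integral>y. g y \<partial>P) + a"
    proof -
      interpret prob_space P by (rule pP)
      have "(\<integral>y. g y + a \<partial>P) = (\<integral>y. g y \<partial>P) + (\<integral>y. a \<partial>P)"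
        by (rule Bochner_Integration.integral_add[OF ig]) simp
      then show ?thesis by (simp add: prob_space)
    qed
    then show ?thesis unfolding var_wrt_def v_def by simp
  qed
  have ice: "I_ice P f c = sqrt v" for c
    unfolding I_ice_def assms(7) using shift by simp
  have "(\<integral>c. I_ice P f c \<partial>Q) = sqrt v"
    using ice pQ by (simp add: prob_space.prob_space)
  moreover have "(\<lambda>x. \<integral>c. f x c \<partial>Q) = (\<lambda>x. g x + (\<integral>c. h c \<partial>Q))"
    
  proof
    fix x
    interpret prob_space Q by (rule pQ)
    have "(\<integral>c. g x + h c \<partial>Q) = (\<integral>c. g x \<partial>Q) + (\<integral>c. h c \<partial>Q)"
      by (rule Bochner_Integration.integral_add[OF _ ih]) simp
    then show "(\<integral>c. f x c \<partial>Q) = g x + (\<integral>c. h c \<partial>Q)" unfolding assms(7) by (simp add: prob_space)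
  qed
  hence "I_pdp P Q f = sqrt v" unfolding I_pdp_def using shift by simp
  ultimately show ?thesis unfolding P_def Q_def by simp
qed

end
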